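(* Let $\mathbb{F}$ be an algebraically closed field with $\mathrm{Char}(\mathbb{F})\ne2$, and let $y,z\in\mathbb{F}$ be nonzero with $y\neq1$, $y\neq-1$, $z\neq1$, $yz\neq1$, $(y+1)z\neq2$. Then the pair $A=\begin{pmatrix}0&z&0\\1&0&1-z\\0&1&0\end{pmatrix}$, $A^*=\begin{pmatrix}0&yz&0\\1&0&yz-1\\0&-1&0\end{pmatrix}$ is a Leonard pair in $\mathrm{Mat}_3(\mathbb{F})$, and it has a parameter array with $\theta_0=1,\theta_1=0,\theta_2=-1$, $\theta^*_0=1,\theta^*_1=0,\theta^*_2=-1$, $\varphi_1=\varphi_2=(y+1)z-2$, $\phi_1=\phi_2=(y+1)z$.
   Context: A Leonard pair in $\mathrm{Mat}_{d+1}(\mathbb{F})$ is a pair of matrices $A,A^*$ such that there is a basis of $\mathbb{F}^{d+1}$ in which $A$ is irreducible tridiagonal (tridiagonal with all sub/superdiagonal entries nonzero) and $A^*$ diagonal, and a basis in which $A^*$ is irreducible tridiagonal and $A$ diagonal. A Leonard system is $(A,\{E_i\}_{i=0}^d,A^*,\{E^*_i\}_{i=0}^d)$ where $A,A^*$ each have $d+1$ distinct eigenvalues, $\{E_i\},\{E^*_i\}$ are orderings of their primitive idempotents, and $E_iA^*E_j,E^*_iAE^*_j$ are $0$ for $|i-j|>1$ and nonzero for $|i-j|=1$. Eigenvalue sequences: $AE_i=\theta_iE_i$, $A^*E^*_i=\theta^*_iE^*_i$. First split sequence: for nonzero $v\in E^*_0V$, $u_i=(A-\theta_{i-1}I)\cdots(A-\theta_0I)v$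 form a basis in which $A^*$ is upper bidiagonal with diagonal $\theta^*_0,\dots,\theta^*_d$ and superdiagonal $\varphi_1,\dots,\varphi_d$. Second split sequence $\{\phi_i\}$: first split sequence of $(A,\{E_{d-i}\},A^*,\{E^*_i\})$. Parameter array $(\{\theta_i\},\{\theta^*_i\},\{\varphi_i\},\{\phi_i\})$; a parameter array of a Leonard pair is that of any associated Leonard system. *)

theory Defs
  imports "Jordan_Normal_Form.Matrix" "HOL-Computational_Algebra.Polynomial"
begin

definition alg_closed :: "'a::field itself \<Rightarrow> bool" where
  "alg_closed _ \<longleftrightarrow> (\<forall>p :: 'a poly. degree p > 0 \<longrightarrow> (\<exists>x. poly p x = 0))"

definition irred_tridiag :: "nat \<Rightarrow> 'a::field mat \<Rightarrow> bool" where
  "irred_tridiag n M \<longleftrightarrow> M \<in> carrier_mat n n \<and>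
     (\<forall>i<n. \<forall>j<n. (i + 1 < j \<or> j + 1 < i) \<longrightarrow> M $$ (i,j) = 0) \<and>
     (\<forall>i. i + 1 < n \<longrightarrow> M $$ (i, i+1) \<noteq> 0 \<and> M $$ (i+1, i) \<noteq> 0)"

(* Matrix of A w.r.t. the basis given by the columns of the invertible matrix P
   (with inverse Q) is Q * A * P. *)
definition basis_change :: "nat \<Rightarrow> 'a::field mat \<Rightarrow> 'a mat \<Rightarrow> bool" where
  "basis_change n P Q \<longleftrightarrow> P \<in> carrier_mat n n \<and> Q \<in> carrier_mat n n \<and>
     P * Q = 1\<^sub>m n \<and> Q * P = 1\<^sub>m n"

definition leonard_pair :: "nat \<Rightarrow> 'a::field mat \<Rightarrow> 'a mat \<Rightarrow> bool" where
  "leonard_pair d A B \<longleftrightarrow> A \<in> carrier_mat (d+1) (d+1) \<and> B \<in> carrier_mat (d+1) (d+1) \<and>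
     (\<exists>P Q. basis_change (d+1) P Q \<and> irred_tridiag (d+1) (Q * A * P) \<and> diagonal_mat (Q * B * P)) \<and>
     (\<exists>P Q. basis_change (d+1) P Q \<and> irred_tridiag (d+1) (Q * B * P) \<and> diagonal_mat (Q * A * P))"

(* E_0..E_d is an ordering of the primitive idempotents of A, where A has the
   d+1 distinct eigenvalues theta_0..theta_d and A E_i = theta_i E_i. *)
definition prim_idem_seq :: "nat \<Rightarrow> 'a::field mat \<Rightarrow> (nat \<Rightarrow> 'a mat) \<Rightarrow> (nat \<Rightarrow> 'a) \<Rightarrow> bool" where
  "prim_idem_seq d A E \<theta> \<longleftrightarrow> A \<in> carrier_mat (d+1) (d+1) \<and>
     inj_on \<theta> {0..d} \<and>
     (\<forall>i\<le>d. E i \<in> carrier_mat (d+1) (d+1) \<and> E i \<noteq> 0\<^sub>m (d+1) (d+1) \<and> A * E i = \<theta> i \<cdot>\<^sub>m E i) \<and>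
     (\<forall>i\<le>d. \<forall>j\<le>d. E i * E j = (if i = j then E i else 0\<^sub>m (d+1) (d+1))) \<and>
     (\<forall>r<d+1. \<forall>c<d+1. (\<Sum>i\<le>d. E i $$ (r,c)) = (1\<^sub>m (d+1)) $$ (r,c))"

definition leonard_system :: "nat \<Rightarrow> 'a::field mat \<Rightarrow> (nat \<Rightarrow> 'a mat) \<Rightarrow> (nat \<Rightarrow> 'a)
     \<Rightarrow> 'a mat \<Rightarrow> (nat \<Rightarrow> 'a mat) \<Rightarrow> (nat \<Rightarrow> 'a) \<Rightarrow> bool" where
  "leonard_system d A E \<theta> B Es \<theta>s \<longleftrightarrow>
     prim_idem_seq d A E \<theta> \<and> prim_idem_seq d B Es \<theta>s \<and>
     (\<forall>i\<le>d. \<forall>j\<le>d. (i + 1 < j \<or> j + 1 < i) \<longrightarrow>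
         E i * B * E j = 0\<^sub>m (d+1) (d+1) \<and> Es i * A * Es j = 0\<^sub>m (d+1) (d+1)) \<and>
     (\<forall>i\<le>d. \<forall>j\<le>d. (i + 1 = j \<or> j + 1 = i) \<longrightarrow>
         E i * B * E j \<noteq> 0\<^sub>m (d+1) (d+1) \<and> Es i * A * Es j \<noteq> 0\<^sub>m (d+1) (d+1))"

primrec split_vec :: "'a::field mat \<Rightarrow> (nat \<Rightarrow> 'a) \<Rightarrow> 'a vec \<Rightarrow> nat \<Rightarrow> 'a vec" where
  "split_vec A \<theta> v 0 = v"
| "split_vec A \<theta> v (Suc i) = (A - \<theta> i \<cdot>\<^sub>m 1\<^sub>m (dim_row A)) *\<^sub>v split_vec A \<theta> v i"

definition upper_bidiag :: "nat \<Rightarrow> (nat \<Rightarrow> 'a::field) \<Rightarrow> (nat \<Rightarrow> 'a) \<Rightarrow> 'a mat" where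
  "upper_bidiag d \<theta>s \<phi> = mat (d+1) (d+1)
     (\<lambda>(i,j). if i = j then \<theta>s i else if j = i + 1 then \<phi> j else 0)"

definition first_split_seq :: "nat \<Rightarrow> 'a::field mat \<Rightarrow> (nat \<Rightarrow> 'a mat) \<Rightarrow> (nat \<Rightarrow> 'a)
     \<Rightarrow> 'a mat \<Rightarrow> (nat \<Rightarrow> 'a mat) \<Rightarrow> (nat \<Rightarrow> 'a) \<Rightarrow> (nat \<Rightarrow> 'a) \<Rightarrow> bool" where
  "first_split_seq d A E \<theta> B Es \<theta>s \<phi> \<longleftrightarrow>
     (\<exists>v. v \<in> carrier_vec (d+1) \<and> v \<noteq> 0\<^sub>v (d+1) \<and> Es 0 *\<^sub>v v = v \<and>
        (let U = mat_of_cols (d+1) (map (split_vec A \<theta> v) [0..<d+1]) in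
          \<exists>Q. basis_change (d+1) U Q \<and> Q * B * U = upper_bidiag d \<theta>s \<phi>))"

definition parameter_array :: "nat \<Rightarrow> 'a::field mat \<Rightarrow> 'a mat \<Rightarrow> (nat \<Rightarrow> 'a) \<Rightarrow> (nat \<Rightarrow> 'a)
     \<Rightarrow> (nat \<Rightarrow> 'a) \<Rightarrow> (nat \<Rightarrow> 'a) \<Rightarrow> bool" where
  "parameter_array d A B \<theta> \<theta>s \<phi> \<phi>' \<longleftrightarrow>
     (\<exists>E Es. leonard_system d A E \<theta> B Es \<theta>s \<and>
        first_split_seq d A E \<theta> B Es \<theta>s \<phi> \<and>
        first_split_seq d A (\<lambda>i. E (d - i)) (\<lambda>i. \<theta> (d - i)) B Es \<theta>s \<phi>')"

end

theory Submission
  imports Defs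
begin


declare vec_of_list_Cons[simp del] vec_of_list_Nil[simp del]

definition M3 :: "'a \<Rightarrow> 'a \<Rightarrow> 'a \<Rightarrow> 'a \<Rightarrow> 'a \<Rightarrow> 'a \<Rightarrow> 'a \<Rightarrow> 'a \<Rightarrow> 'a \<Rightarrow> 'a mat" where
  "M3 a b c d e f g h i = mat_of_rows_list 3 [[a,b,c],[d,e,f],[g,h,i]]"

lemma all3: "(\<forall>i<(3::nat). P i) \<longleftrightarrow> P 0 \<and> P 1 \<and> P 2"
  by (auto simp: less_Suc_eq eval_nat_numeral)
lemma all2: "(\<forall>i\<le>(2::nat). P i) \<longleftrightarrow> P 0 \<and> P 1 \<and> P 2"
  by (auto simp: le_Suc_eq eval_nat_numeral)
lemma sum2: "(\<Sum>i\<le>(2::nat). f i) = f 0 + f 1 + f 2"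
  by (simp add: eval_nat_numeral)
lemma sum3: "(\<Sum>i<(3::nat). f i) = f 0 + f 1 + f 2"
  by (simp add: eval_nat_numeral)
lemma sum3': "(\<Sum>i\<in>{0..<3::nat}. f i) = f 0 + f 1 + f 2"
  by (simp add: eval_nat_numeral)

lemma M3_carrier[simp]: "M3 a b c d e f g h i \<in> carrier_mat 3 3"
proof -
  have l: "length [[a,b,c],[d,e,f],[g,h,i]] = 3" by (simp add: eval_nat_numeral)
  show ?thesis unfolding M3_def mat_of_rows_list_def l by (rule mat_carrier)
qed
lemma M3_dim[simp]: "dim_row (M3 a b c d e f g h i) = 3" "dim_col (M3 a b c d e f g h i) = 3"
  by (simp_all add: M3_def mat_of_rows_list_def)
lemma M3_idx[simp]:
  "M3 a b c d e f g h i $$ (0,0) = a"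
  "M3 a b c d e f g h i $$ (0,1) = b"
  "M3 a b c d e f g h i $$ (0,Suc 0) = b"
  "M3 a b c d e f g h i $$ (0,2) = c"
  "M3 a b c d e f g h i $$ (0,Suc (Suc 0)) = c"
  "M3 a b c d e f g h i $$ (1,0) = d"
  "M3 a b c d e f g h i $$ (Suc 0,0) = d"
  "M3 a b c d e f g h i $$ (1,1) = e"
  "M3 a b c d e f g h i $$ (1,Suc 0) = e"
  "M3 a b c d e f g h i $$ (Suc 0,1) = e"
  "M3 a b c d e f g h i $$ (Suc 0,Suc 0) = e"
  "M3 a b c d e f g h i $$ (1,2) = f"
  "M3 a b c d e f g h i $$ (1,Suc (Suc 0)) = f"
  "M3 a b c d e f g h i $$ (Suc 0,2) = f"
  "M3 a b c d e f g h i $$ (Suc 0,Suc (Suc 0)) = f"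
  "M3 a b c d e f g h i $$ (2,0) = g"
  "M3 a b c d e f g h i $$ (Suc (Suc 0),0) = g"
  "M3 a b c d e f g h i $$ (2,1) = h"
  "M3 a b c d e f g h i $$ (2,Suc 0) = h"
  "M3 a b c d e f g h i $$ (Suc (Suc 0),1) = h"
  "M3 a b c d e f g h i $$ (Suc (Suc 0),Suc 0) = h"
  "M3 a b c d e f g h i $$ (2,2) = i"
  "M3 a b c d e f g h i $$ (2,Suc (Suc 0)) = i"
  "M3 a b c d e f g h i $$ (Suc (Suc 0),2) = i"
  "M3 a b c d e f g h i $$ (Suc (Suc 0),Suc (Suc 0)) = i"
  by (simp_all add: M3_def mat_of_rows_list_def eval_nat_numeral)

lemma M3_eqI: assumes "M \<in> carrier_mat 3 3" "N \<in> carrier_mat 3 3"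
  "M$$(0,0) = N$$(0,0)" "M$$(0,1) = N$$(0,1)" "M$$(0,2) = N$$(0,2)"
  "M$$(1,0) = N$$(1,0)" "M$$(1,1) = N$$(1,1)" "M$$(1,2) = N$$(1,2)"
  "M$$(2,0) = N$$(2,0)" "M$$(2,1) = N$$(2,1)" "M$$(2,2) = N$$(2,2)"
  shows "M = N"
proof (rule eq_matI)
  fix i j assume "i < dim_row N" "j < dim_col N"
  then have "i < 3" "j < 3" using assms by auto
  then have "i = 0 \<or> i = 1 \<or> i = 2" "j = 0 \<or> j = 1 \<or> j = 2" by auto
  then show "M $$ (i,j) = N $$ (i,j)" using assms by auto
qed (use assms in auto)

lemma M3_ext: assumes "M \<in> carrier_mat 3 3" shows "M = M3 (M$$(0,0)) (M$$(0,1)) (M$$(0,2)) (M$$(1,0)) (M$$(1,1)) (M$$(1,2)) (M$$(2,0)) (M$$(2,1)) (M$$(2,2))"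
  by (rule M3_eqI[OF assms M3_carrier]) (simp_all only: M3_idx)

lemma M3_eq[simp]: "M3 a b c d e f g h i = M3 a' b' c' d' e' f' g' h' i' \<longleftrightarrow>
   a = a' \<and> b = b' \<and> c = c' \<and> d = d' \<and> e = e' \<and> f = f' \<and> g = g' \<and> h = h' \<and> i = i'"
proof
  assume H: "M3 a b c d e f g h i = M3 a' b' c' d' e' f' g' h' i'"
  have "\<And>k l. M3 a b c d e f g h i $$ (k,l) = M3 a' b' c' d' e' f' g' h' i' $$ (k,l)" using H by simp
  from this[of 0 0] this[of 0 1] this[of 0 2] this[of 1 0] this[of 1 1] this[of 1 2] this[of 2 0] this[of 2 1] this[of 2 2]
  show "a = a' \<and> b = b' \<and> c = c' \<and> d = d' \<and> e = e' \<and> f = f' \<and> g = g' \<and> h = h' \<and> i = i'"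
    by (simp only: M3_idx)
next
  assume "a = a' \<and> b = b' \<and> c = c' \<and> d = d' \<and> e = e' \<and> f = f' \<and> g = g' \<and> h = h' \<and> i = i'"
  then show "M3 a b c d e f g h i = M3 a' b' c' d' e' f' g' h' i'" by simp
qed

lemma M3_mult[simp]: "M3 a b c d e f g h i * M3 a' b' c' d' e' f' g' h' i' =
  M3 (a*a'+b*d'+c*g') (a*b'+b*e'+c*h') (a*c'+b*f'+c*i')
     (d*a'+e*d'+f*g') (d*b'+e*e'+f*h') (d*c'+e*f'+f*i')
     (g*a'+h*d'+i*g') (g*b'+h*e'+i*h') (g*c'+h*f'+i*i')"
  by (rule M3_eqI[OF mult_carrier_mat[OF M3_carrier M3_carrier] M3_carrier]) (simp_all add: scalar_prod_def sum3' row_def col_def)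

lemma one3: "1\<^sub>m 3 = M3 1 0 0 0 1 0 0 0 1"
  by (rule M3_eqI) auto
lemma zero3: "0\<^sub>m 3 3 = M3 0 0 0 0 0 0 0 0 0"
  by (rule M3_eqI) auto
lemma smult3[simp]: "k \<cdot>\<^sub>m M3 a b c d e f g h i = M3 (k*a) (k*b) (k*c) (k*d) (k*e) (k*f) (k*g) (k*h) (k*i)"
  by (rule M3_eqI) auto
lemma minus3[simp]: "M3 a b c d e f g h i - M3 a' b' c' d' e' f' g' h' i' =
  M3 (a-a') (b-b') (c-c') (d-d') (e-e') (f-f') (g-g') (h-h') (i-i')"
  by (rule M3_eqI) auto

lemma mulv3[simp]: "M3 a b c d e f g h i *\<^sub>v vec_of_list [p,q,r] = vec_of_list [a*p+b*q+c*r, d*p+e*q+f*r, g*p+h*q+i*r]"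
  apply (rule eq_vecI)
   apply (auto simp: less_Suc_eq eval_nat_numeral scalar_prod_def row_def M3_def mat_of_rows_list_def vec_of_list_index)
  done

lemma vec3_eq[simp]: "vec_of_list [a,b,c] = vec_of_list [a',b',c'] \<longleftrightarrow> a = a' \<and> b = b' \<and> c = c'"
proof -
  have "vec_of_list xs = vec_of_list ys \<longleftrightarrow> xs = ys" for xs ys :: "'a list"
    by (metis list_vec)
  then show ?thesis by simp
qed
lemma vec3_carrier[simp]: "vec_of_list [a,b,c] \<in> carrier_vec 3"
proof -
  have l: "length [a,b,c] = 3" by (simp add: eval_nat_numeral)
  show ?thesis unfolding carrier_vec_def mem_Collect_eq dim_vec_of_list l ..
qed
lemma zerov3: "0\<^sub>v 3 = vec_of_list [0,0,0]"
  by (rule eq_vecI) (auto simp: less_Suc_eq eval_nat_numeral vec_of_list_index)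
lemma cols3[simp]: "mat_of_cols 3 [vec_of_list [a,d,g], vec_of_list [b,e,h], vec_of_list [c,f,i]] = M3 a b c d e f g h i"
  by (rule M3_eqI[OF _ M3_carrier]) (simp_all add: mat_of_cols_def vec_of_list_index eval_nat_numeral)


lemma mrl3: "mat_of_rows_list 3 [[a,b,c],[d,e,f],[g,h,i]] = M3 a b c d e f g h i"
  by (simp add: M3_def)

lemma two_ne:
  assumes "CHAR('a::field) \<noteq> 2" shows "(2::'a) \<noteq> 0"
proof
  assume h: "(2::'a) = 0"
  have d: "CHAR('a) dvd 2" using of_nat_eq_0_iff_char_dvd[of 2, where 'a='a] h by simp
  have "CHAR('a) \<le> 2" using dvd_imp_le[OF d] by simp
  moreover have "CHAR('a) \<noteq> 0" using d by (metis dvd_0_left_iff zero_neq_numeral)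
  moreover have "CHAR('a) \<noteq> Suc 0" by simp
  ultimately show False using assms by linarith
qed

lemma allSuc2: "(\<forall>i. i + 1 < (3::nat) \<longrightarrow> P i) \<longleftrightarrow> P 0 \<and> P 1"
proof
  assume "\<forall>i. i + 1 < (3::nat) \<longrightarrow> P i" then show "P 0 \<and> P 1" by auto
next
  assume H: "P 0 \<and> P 1"
  show "\<forall>i. i + 1 < (3::nat) \<longrightarrow> P i"
  proof (intro allI impI)
    fix i :: nat assume "i + 1 < 3" then have "i = 0 \<or> i = 1" by auto
    then show "P i" using H by auto
  qed
qed

lemma irred3: "irred_tridiag 3 (M3 a b c d e f g h i) \<longleftrightarrow>
   c = 0 \<and> g = 0 \<and> b \<noteq> 0 \<and> d \<noteq> 0 \<and> f \<noteq> 0 \<and> h \<noteq> 0"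
  unfolding irred_tridiag_def by (simp add: all3 allSuc2) (auto simp: eval_nat_numeral less_Suc_eq)

lemma diag3: "diagonal_mat (M3 a b c d e f g h i) \<longleftrightarrow>
   b = 0 \<and> c = 0 \<and> d = 0 \<and> f = 0 \<and> g = 0 \<and> h = 0"
  unfolding diagonal_mat_def by (simp add: all3)

lemma bidiag3: "upper_bidiag 2 t p = M3 (t 0) (p 1) 0 0 (t 1) (p 2) 0 0 (t 2)"
  by (rule M3_eqI[OF _ M3_carrier]) (simp_all add: upper_bidiag_def eval_nat_numeral)

definition det3 :: "'a::field mat \<Rightarrow> 'a" where
  "det3 M = M$$(0,0) * (M$$(1,1)*M$$(2,2) - M$$(1,2)*M$$(2,1))
          - M$$(0,1) * (M$$(1,0)*M$$(2,2) - M$$(1,2)*M$$(2,0))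
          + M$$(0,2) * (M$$(1,0)*M$$(2,1) - M$$(1,1)*M$$(2,0))"

definition adj3 :: "'a::field mat \<Rightarrow> 'a mat" where
  "adj3 M = M3 (M$$(1,1)*M$$(2,2) - M$$(1,2)*M$$(2,1)) (M$$(0,2)*M$$(2,1) - M$$(0,1)*M$$(2,2)) (M$$(0,1)*M$$(1,2) - M$$(0,2)*M$$(1,1))
               (M$$(1,2)*M$$(2,0) - M$$(1,0)*M$$(2,2)) (M$$(0,0)*M$$(2,2) - M$$(0,2)*M$$(2,0)) (M$$(0,2)*M$$(1,0) - M$$(0,0)*M$$(1,2))
               (M$$(1,0)*M$$(2,1) - M$$(1,1)*M$$(2,0)) (M$$(0,1)*M$$(2,0) - M$$(0,0)*M$$(2,1)) (M$$(0,0)*M$$(1,1) - M$$(0,1)*M$$(1,0))"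

lemma adj3_carrier[simp]: "adj3 M \<in> carrier_mat 3 3" by (simp add: adj3_def)

lemma adj3_right: "M3 a b c d e f g h i * adj3 (M3 a b c d e f g h i) = det3 (M3 a b c d e f g h i) \<cdot>\<^sub>m 1\<^sub>m 3"
  unfolding adj3_def det3_def one3 M3_mult smult3 M3_idx M3_eq by (intro conjI) (simp_all add: algebra_simps)
lemma adj3_left: "adj3 (M3 a b c d e f g h i) * M3 a b c d e f g h i = det3 (M3 a b c d e f g h i) \<cdot>\<^sub>m 1\<^sub>m 3"
  unfolding adj3_def det3_def one3 M3_mult smult3 M3_idx M3_eq by (intro conjI) (simp_all add: algebra_simps)

lemma inv3:
  assumes U: "U \<in> carrier_mat 3 3" and d: "det3 U \<noteq> 0"
  shows "basis_change 3 U (inverse (det3 U) \<cdot>\<^sub>m adj3 U)"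
proof -
  obtain a b c d e f g h i where Ue: "U = M3 a b c d e f g h i" using M3_ext[OF U] by blast
  have r: "U * adj3 U = det3 U \<cdot>\<^sub>m 1\<^sub>m 3" unfolding Ue by (rule adj3_right)
  have l: "adj3 U * U = det3 U \<cdot>\<^sub>m 1\<^sub>m 3" unfolding Ue by (rule adj3_left)
  have "U * (inverse (det3 U) \<cdot>\<^sub>m adj3 U) = inverse (det3 U) \<cdot>\<^sub>m (U * adj3 U)"
    by (rule mult_smult_distrib[OF U adj3_carrier])
  also have "\<dots> = 1\<^sub>m 3" using d by (simp add: r one3)
  finally have 1: "U * (inverse (det3 U) \<cdot>\<^sub>m adj3 U) = 1\<^sub>m 3" .
  have "(inverse (det3 U) \<cdot>\<^sub>m adj3 U) * U = inverse (det3 U) \<cdot>\<^sub>m (adj3 U * U)"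
    by (rule mult_smult_assoc_mat[OF adj3_carrier U])
  also have "\<dots> = 1\<^sub>m 3" using d by (simp add: l one3)
  finally show ?thesis using 1 U unfolding basis_change_def by simp
qed

lemma split_ex:
  assumes U: "U \<in> carrier_mat 3 3" and B: "B \<in> carrier_mat 3 3" and D: "D \<in> carrier_mat 3 3"
    and d: "det3 U \<noteq> 0" and BU: "B * U = U * D"
  shows "\<exists>Q. basis_change 3 U Q \<and> Q * B * U = D"
proof (intro exI conjI)
  let ?Q = "inverse (det3 U) \<cdot>\<^sub>m adj3 U"
  show bc: "basis_change 3 U ?Q" by (rule inv3[OF U d])
  have Q: "?Q \<in> carrier_mat 3 3" by simp
  have "?Q * B * U = ?Q * (B * U)" by (rule assoc_mult_mat[OF Q B U])
  also have "\<dots> = ?Q * (U * D)" by (simp add: BU)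
  also have "\<dots> = (?Q * U) * D" by (rule assoc_mult_mat[OF Q U D, symmetric])
  also have "\<dots> = D" using bc D unfolding basis_change_def by simp
  finally show "?Q * B * U = D" .
qed

lemma nz20: "M \<in> carrier_mat 3 3 \<Longrightarrow> M $$ (2,0) \<noteq> 0 \<Longrightarrow> M \<noteq> 0\<^sub>m 3 3"
  by auto

lemma upt3: "[0..<3] = [0::nat,1,2]" by (simp add: eval_nat_numeral)
lemma sv1: "split_vec A t v 1 = (A - t 0 \<cdot>\<^sub>m 1\<^sub>m (dim_row A)) *\<^sub>v v" by simp
lemma sv2: "split_vec A t v 2 = (A - t 1 \<cdot>\<^sub>m 1\<^sub>m (dim_row A)) *\<^sub>v ((A - t 0 \<cdot>\<^sub>m 1\<^sub>m (dim_row A)) *\<^sub>v v)"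
  by (simp add: numeral_2_eq_2)



definition "AA z = M3 0 z 0 1 0 (1-z) 0 1 (0::'a::field)"
definition "BB y z = M3 0 (y*z) 0 1 0 (y*z-1) 0 (-1) (0::'a::field)"

definition "EE (z::'a::field) (i::nat) = (if i = 0 then M3 (z/2) (z/2) (z*(1-z)/2) (1/2) (1/2) ((1-z)/2) (1/2) (1/2) ((1-z)/2)
   else if i = 1 then M3 (1-z) 0 ((z-1)*z) 0 0 0 (-1) 0 z
   else M3 (z/2) (-z/2) (z*(1-z)/2) (-1/2) (1/2) (-(1-z)/2) (1/2) (-1/2) ((1-z)/2))"

definition "ES (y::'a::field) z (i::nat) = (if i = 0 then M3 (y*z/2) (y*z/2) (y*z*(y*z-1)/2) (1/2) (1/2) ((y*z-1)/2) (-1/2) (-1/2) (-(y*z-1)/2)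
   else if i = 1 then M3 (1-y*z) 0 ((1-y*z)*(y*z)) 0 0 0 1 0 (y*z)
   else M3 (y*z/2) (-y*z/2) (y*z*(y*z-1)/2) (-1/2) (1/2) (-(y*z-1)/2) (-1/2) (1/2) (-(y*z-1)/2))"

lemma inj_th: assumes two: "(2::'a::field) \<noteq> 0" shows "inj_on (\<lambda>i. 1 - of_nat i :: 'a) {0..2}"
proof -
  have s: "{0..2::nat} = {0,1,2}" by auto
  have o: "(1::'a) \<noteq> 2" by (metis one_add_one add_cancel_right_right zero_neq_one)
  show ?thesis unfolding s using two o by (auto simp: inj_on_def)
qed

context
  fixes y z :: "'a::field"
  assumes two: "(2::'a) \<noteq> 0" and y0: "y \<noteq> 0" and z0: "z \<noteq> 0" and y1: "y \<noteq> 1" and ym1: "y \<noteq> -1"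
    and z1: "z \<noteq> 1" and yz1: "y * z \<noteq> 1" and t2: "(y + 1) * z \<noteq> 2"
begin

lemma four: "(4::'a) \<noteq> 0"
proof -
  have h: "(2::'a) * 2 \<noteq> 0" by (metis mult_eq_0_iff two)
  have e: "(2::'a) * 2 = 4" by simp
  from h show ?thesis unfolding e .
qed

lemma eight: "(8::'a) \<noteq> 0"
proof -
  have h: "(2::'a) * 4 \<noteq> 0" by (metis mult_eq_0_iff two four)
  have e: "(2::'a) * 4 = 8" by simp
  from h show ?thesis unfolding e .
qed

lemma n16: "(16::'a) \<noteq> 0"
proof -
  have h: "(2::'a) * 8 \<noteq> 0" by (metis mult_eq_0_iff two eight)
  have e: "(2::'a) * 8 = 16" by simp
  from h show ?thesis unfolding e .
qed

lemma n32: "(32::'a) \<noteq> 0"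
proof -
  have h: "(2::'a) * 16 \<noteq> 0" by (metis mult_eq_0_iff two n16)
  have e: "(2::'a) * 16 = 32" by simp
  from h show ?thesis unfolding e .
qed

lemma n64: "(64::'a) \<noteq> 0"
proof -
  have h: "(2::'a) * 32 \<noteq> 0" by (metis mult_eq_0_iff two n32)
  have e: "(2::'a) * 32 = 64" by simp
  from h show ?thesis unfolding e .
qed

lemma s_nz: "z + y*z \<noteq> 0"
proof -
  have "z + y*z = (y+1)*z" by (simp add: algebra_simps)
  moreover have "y + 1 \<noteq> 0" using ym1 eq_neg_iff_add_eq_0[of y 1] by simp
  ultimately show ?thesis using z0 by simp
qed

lemma t_nz: "z + y*z - 2 \<noteq> 0"
proof -
  have "z + y*z - 2 = (y+1)*z - 2" by (simp add: algebra_simps)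
  then show ?thesis using t2 by simp
qed

lemma lp: "leonard_pair 2 (AA z) (BB y z)"
proof -
  let ?P1 = "M3 (y*z) (1-y*z) (-y*z) 1 0 1 (-1) 1 1"
  let ?Q1 = "M3 (1/2) (1/2) ((y*z-1)/2) 1 0 (y*z) (-1/2) (1/2) (-(y*z-1)/2)"
  let ?P2 = "M3 z (z-1) z 1 0 (-1) 1 1 1"
  let ?Q2 = "M3 (1/2) (1/2) ((1-z)/2) (-1) 0 z (1/2) (-1/2) ((1-z)/2)"
  have bc1: "basis_change 3 ?P1 ?Q1" unfolding basis_change_def one3 using two four eight n16 n32 n64 by (simp add: field_simps)
  have bc2: "basis_change 3 ?P2 ?Q2" unfolding basis_change_def one3 using two four eight n16 n32 n64 by (simp add: field_simps)
  have T1: "?Q1 * AA z * ?P1 = M3 (y*z+z-1) ((2-y*z-z)/2) 0 (z+y*z) 0 (z+y*z) 0 ((2-y*z-z)/2) (1-y*z-z)"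
    unfolding AA_def using two four eight n16 n32 n64 by (simp add: field_simps)
  have D1: "?Q1 * BB y z * ?P1 = M3 1 0 0 0 0 0 0 0 (-1)"
    unfolding BB_def using two four eight n16 n32 n64 by (simp add: field_simps)
  have T2: "?Q2 * BB y z * ?P2 = M3 (y*z+z-1) ((z+y*z-2)/2) 0 (-(z+y*z)) 0 (z+y*z) 0 (-(z+y*z-2)/2) (1-y*z-z)"
    unfolding BB_def using two four eight n16 n32 n64 by (simp add: field_simps)
  have D2: "?Q2 * AA z * ?P2 = M3 1 0 0 0 0 0 0 0 (-1)"
    unfolding AA_def using two four eight n16 n32 n64 by (simp add: field_simps)
  have n1: "(2-y*z-z)/2 \<noteq> 0" using t_nz two by (auto simp: field_simps)
  have n2: "(z+y*z-2)/2 \<noteq> 0" using t_nz two by (auto simp: field_simps)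
  have n3: "-(z+y*z-2)/2 \<noteq> 0" using t_nz two by (auto simp: field_simps)
  have n4: "-(z+y*z) \<noteq> 0" using s_nz neg_equal_0_iff_equal by blast
  have i1: "irred_tridiag 3 (?Q1 * AA z * ?P1)" unfolding T1 irred3 using n1 s_nz by simp
  have i2: "irred_tridiag 3 (?Q2 * BB y z * ?P2)" unfolding T2 irred3 using n2 n3 n4 s_nz by simp
  have d1: "diagonal_mat (?Q1 * BB y z * ?P1)" unfolding D1 diag3 by simp
  have d2: "diagonal_mat (?Q2 * AA z * ?P2)" unfolding D2 diag3 by simp
  have e3: "(2::nat) + 1 = 3" by simp
  show ?thesis unfolding leonard_pair_def e3
    apply (intro conjI)
       apply (simp add: AA_def)
      apply (simp add: BB_def)
    using bc1 i1 d1 apply blast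
    using bc2 i2 d2 apply blast
    done
qed


lemma prim_A: "prim_idem_seq 2 (AA z) (EE z) (\<lambda>i. 1 - of_nat i)"
  unfolding prim_idem_seq_def using inj_th[OF two] two four eight n16 n32 n64
  by (simp add: all2 all3 sum2 EE_def AA_def one3 zero3) (simp_all add: field_simps)

lemma prim_B: "prim_idem_seq 2 (BB y z) (ES y z) (\<lambda>i. 1 - of_nat i)"
  unfolding prim_idem_seq_def using inj_th[OF two] two four eight n16 n32 n64
  by (simp add: all2 all3 sum2 ES_def BB_def one3 zero3) (simp_all add: field_simps)

lemma ls: "leonard_system 2 (AA z) (EE z) (\<lambda>i. 1 - of_nat i) (BB y z) (ES y z) (\<lambda>i. 1 - of_nat i)"
proof -
  have z1: "EE z 0 * BB y z * EE z 2 = 0\<^sub>m 3 3" "EE z 2 * BB y z * EE z 0 = 0\<^sub>m 3 3"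
    "ES y z 0 * AA z * ES y z 2 = 0\<^sub>m 3 3" "ES y z 2 * AA z * ES y z 0 = 0\<^sub>m 3 3"
    unfolding EE_def ES_def AA_def BB_def zero3 using two four eight n16 n32 n64 by (simp_all add: field_simps)
  have e1: "(EE z 0 * BB y z * EE z 1) $$ (2,0) = (z + y*z - 2) / (-2)"
       "(EE z 1 * BB y z * EE z 0) $$ (2,0) = (z + y*z) / (-2)"
       "(EE z 1 * BB y z * EE z 2) $$ (2,0) = (z + y*z) / 2"
       "(EE z 2 * BB y z * EE z 1) $$ (2,0) = (z + y*z - 2) / 2"
       "(ES y z 0 * AA z * ES y z 1) $$ (2,0) = (z + y*z - 2) / 2"
       "(ES y z 1 * AA z * ES y z 0) $$ (2,0) = (z + y*z) / 2"
       "(ES y z 1 * AA z * ES y z 2) $$ (2,0) = (z + y*z) / (-2)"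
       "(ES y z 2 * AA z * ES y z 1) $$ (2,0) = (z + y*z - 2) / (-2)"
    unfolding EE_def ES_def AA_def BB_def using two four eight n16 n32 n64 by (simp_all add: field_simps)
  have nzs: "(z + y*z - 2) / (-2) \<noteq> 0" "(z + y*z) / (-2) \<noteq> 0" "(z + y*z) / 2 \<noteq> 0" "(z + y*z - 2) / 2 \<noteq> 0"
    using t_nz s_nz two by simp_all
  have c: "\<And>i j. EE z i * BB y z * EE z j \<in> carrier_mat 3 3" "\<And>i j. ES y z i * AA z * ES y z j \<in> carrier_mat 3 3"
    by (simp_all add: EE_def ES_def AA_def BB_def)
  have n1: "EE z 0 * BB y z * EE z 1 \<noteq> 0\<^sub>m 3 3" "EE z 1 * BB y z * EE z 0 \<noteq> 0\<^sub>m 3 3"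
    "EE z 1 * BB y z * EE z 2 \<noteq> 0\<^sub>m 3 3" "EE z 2 * BB y z * EE z 1 \<noteq> 0\<^sub>m 3 3"
    "ES y z 0 * AA z * ES y z 1 \<noteq> 0\<^sub>m 3 3" "ES y z 1 * AA z * ES y z 0 \<noteq> 0\<^sub>m 3 3"
    "ES y z 1 * AA z * ES y z 2 \<noteq> 0\<^sub>m 3 3" "ES y z 2 * AA z * ES y z 1 \<noteq> 0\<^sub>m 3 3"
    using nz20[OF c(1)] nz20[OF c(2)] e1 nzs by metis+
  show ?thesis unfolding leonard_system_def using prim_A prim_B z1 n1
    by (simp add: all2)
qed

lemma fs1: "first_split_seq 2 (AA z) E (\<lambda>i. 1 - of_nat i) (BB y z) (ES y z) (\<lambda>i. 1 - of_nat i) (\<lambda>_. (y + 1) * z - 2)"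
proof -
  define v where "v = vec_of_list [y*z, 1, -1::'a]"
  let ?U = "M3 (y*z) (z-y*z) (z*(y*z+z-2)) 1 (y*z+z-2) (2-z-y*z) (-1) 2 (y*z+z-2)"
  let ?D = "M3 1 ((y + 1) * z - 2) 0 0 0 ((y + 1) * z - 2) 0 0 (-1)"
  have U: "mat_of_cols (2+1) (map (split_vec (AA z) (\<lambda>i. 1 - of_nat i) v) [0..<2+1]) = ?U"
    unfolding v_def AA_def by (simp add: upt3 sv1 sv2 one3, (simp add: algebra_simps)?)
  have det: "det3 ?U = z^2 * (y*z+z-2) * (y+1)^2"
    unfolding det3_def by (simp only: M3_idx, (simp add: algebra_simps power2_eq_square)?)
  have y10: "y + 1 \<noteq> 0" using ym1 eq_neg_iff_add_eq_0[of y 1] by simp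
  have t0: "y*z+z-2 \<noteq> 0" using t_nz by (simp add: algebra_simps)
  have dnz: "det3 ?U \<noteq> 0" unfolding det using z0 y10 t0 by simp
  have BU: "BB y z * ?U = ?U * ?D" unfolding BB_def by (simp, (simp add: algebra_simps)?)
  have bd: "upper_bidiag 2 (\<lambda>i. 1 - of_nat i) (\<lambda>_. (y + 1) * z - 2) = ?D"
    by (simp add: bidiag3)
  have ex: "\<exists>Q. basis_change 3 ?U Q \<and> Q * BB y z * ?U = ?D"
    by (rule split_ex[OF M3_carrier _ M3_carrier dnz BU]) (simp add: BB_def)
  have ev: "ES y z 0 *\<^sub>v v = v" unfolding ES_def v_def using two four eight n16 by (simp add: field_simps)
  have vnz: "v \<noteq> 0\<^sub>v 3" unfolding v_def zerov3 by simp
  show ?thesis unfolding first_split_seq_def Let_def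
    apply (rule exI[of _ v], intro conjI)
       apply (simp add: v_def)
      using vnz apply simp
     apply (rule ev)
    apply (unfold U bd)
    using ex apply simp
    done
qed

lemma fs2: "first_split_seq 2 (AA z) E (\<lambda>i. 1 - of_nat (2 - i)) (BB y z) (ES y z) (\<lambda>i. 1 - of_nat i) (\<lambda>_. (y + 1) * z)"
proof -
  define v where "v = vec_of_list [y*z, 1, -1::'a]"
  let ?U = "M3 (y*z) (z+y*z) (z*(z+y*z)) 1 (z+y*z) (z+y*z) (-1) 0 (z+y*z)"
  let ?D = "M3 1 ((y + 1) * z) 0 0 0 ((y + 1) * z) 0 0 (-1)"
  have U: "mat_of_cols (2+1) (map (split_vec (AA z) (\<lambda>i. 1 - of_nat (2 - i)) v) [0..<2+1]) = ?U"
    unfolding v_def AA_def by (simp add: upt3 sv1 sv2 one3, (simp add: algebra_simps)?)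
  have det: "det3 ?U = (z+y*z)^2 * (y*z+z-2)"
    unfolding det3_def by (simp only: M3_idx, (simp add: algebra_simps power2_eq_square)?)
  have t0: "y*z+z-2 \<noteq> 0" using t_nz by (simp add: algebra_simps)
  have dnz: "det3 ?U \<noteq> 0" unfolding det using s_nz t0 by simp
  have BU: "BB y z * ?U = ?U * ?D" unfolding BB_def by (simp, (simp add: algebra_simps)?)
  have bd: "upper_bidiag 2 (\<lambda>i. 1 - of_nat i) (\<lambda>_. (y + 1) * z) = ?D"
    by (simp add: bidiag3)
  have ex: "\<exists>Q. basis_change 3 ?U Q \<and> Q * BB y z * ?U = ?D"
    by (rule split_ex[OF M3_carrier _ M3_carrier dnz BU]) (simp add: BB_def)
  have ev: "ES y z 0 *\<^sub>v v = v" unfolding ES_def v_def using two four eight n16 by (simp add: field_simps)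
  have vnz: "v \<noteq> 0\<^sub>v 3" unfolding v_def zerov3 by simp
  show ?thesis unfolding first_split_seq_def Let_def
    apply (rule exI[of _ v], intro conjI)
       apply (simp add: v_def)
      using vnz apply simp
     apply (rule ev)
    apply (unfold U bd)
    using ex apply simp
    done
qed

lemma pa: "parameter_array 2 (AA z) (BB y z) (\<lambda>i. 1 - of_nat i) (\<lambda>i. 1 - of_nat i)
                           (\<lambda>_. (y + 1) * z - 2) (\<lambda>_. (y + 1) * z)"
  unfolding parameter_array_def using ls fs1 fs2 by blast

end

theorem proposition4p4:
  fixes y z :: "'a::field"
  assumes "alg_closed TYPE('a)"
    and "CHAR('a) \<noteq> 2"
    and "y \<noteq> 0" and "z \<noteq> 0" and "y \<noteq> 1" and "y \<noteq> -1" and "z \<noteq> 1"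
    and "y * z \<noteq> 1" and "(y + 1) * z \<noteq> 2"
  shows "leonard_pair 2 (mat_of_rows_list 3 [[0, z, 0], [1, 0, 1 - z], [0, 1, 0]])
                        (mat_of_rows_list 3 [[0, y * z, 0], [1, 0, y * z - 1], [0, -1, 0]]) \<and>
         parameter_array 2 (mat_of_rows_list 3 [[0, z, 0], [1, 0, 1 - z], [0, 1, 0]])
                           (mat_of_rows_list 3 [[0, y * z, 0], [1, 0, y * z - 1], [0, -1, 0]])
                           (\<lambda>i. 1 - of_nat i) (\<lambda>i. 1 - of_nat i)
                           (\<lambda>_. (y + 1) * z - 2) (\<lambda>_. (y + 1) * z)"
proof -
  have two: "(2::'a) \<noteq> 0" by (rule two_ne[OF assms(2)])
  have eA: "mat_of_rows_list 3 [[0, z, 0], [1, 0, 1 - z], [0, 1, 0]] = AA z" by (simp add: AA_def mrl3)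
  have eB: "mat_of_rows_list 3 [[0, y * z, 0], [1, 0, y * z - 1], [0, -1, 0]] = BB y z" by (simp add: BB_def mrl3)
  show ?thesis unfolding eA eB using lp[OF two assms(3-9)] pa[OF two assms(3-9)] by (rule conjI)
qed

end
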